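(* For any vertex $x\in V$, any set $A\subseteq V$, any integer $T\geq 0$ and any $\lambda>0$, the volume-biased evolving set process $(S_t)$ started from $S_0=\{x\}$ satisfies \[ \widehat{\mathbf P}_x\Big[\max_{0\le t\le T}\frac{\mu(S_t\setminus A)}{\mu(S_t)} > \lambda\,\varepsilon_x(T,A)\Big] < \frac1\lambda, \] where $\varepsilon_x(T,A)$ is the probability that a lazy random walk $(X_i)$ started at $X_0=x$ satisfies $X_j\notin A$ for some $j\in\{0,1,\dots,T\}$.
   Context: Let $G=(V,E)$ be a finite simple undirected graph in which every vertex has positive degree $d(x)$. For $S\subseteq V$, $\mu(S)=\sum_{x\in S}d(x)$. The lazy random walk has transition kernel $p(x,y)=1/(2d(x))$ if $\{x,y\}\in E$, $p(x,x)=1/2$, and $0$ otherwise; $p(x,S)=\sum_{y\in S}p(x,y)$. The evolving set process (ESP): from state $S$, pick $U$ uniform on $[0,1]$ and move to $\{y: p(y,S)\geq U\}$; $K(S,S')$ denotes its transition kernel. The volume-biased ESP is the Markov chain on nonempty subsets with kernel $\widehat K(S,S')=\frac{\mu(S')}{\mu(S)}K(S,S')$; $\widehat{\mathbf P}_x$ denotes its law started at $\{x\}$. *)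

theory Defs
  imports "HOL-Analysis.Analysis"
begin

definition simple_graph :: "'a set \<Rightarrow> ('a \<Rightarrow> 'a \<Rightarrow> bool) \<Rightarrow> bool" where
  "simple_graph V E \<longleftrightarrow> finite V \<and> V \<noteq> {}
     \<and> (\<forall>x y. E x y \<longrightarrow> x \<in> V \<and> y \<in> V)
     \<and> (\<forall>x y. E x y \<longrightarrow> E y x)
     \<and> (\<forall>x. \<not> E x x)"

definition deg :: "'a set \<Rightarrow> ('a \<Rightarrow> 'a \<Rightarrow> bool) \<Rightarrow> 'a \<Rightarrow> nat" where
  "deg V E x = card {y \<in> V. E x y}"

definition vol :: "'a set \<Rightarrow> ('a \<Rightarrow> 'a \<Rightarrow> bool) \<Rightarrow> 'a set \<Rightarrow> real" where
  "vol V E S = (\<Sum>x\<in>S. real (deg V E x))"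

definition lazy_p :: "'a set \<Rightarrow> ('a \<Rightarrow> 'a \<Rightarrow> bool) \<Rightarrow> 'a \<Rightarrow> 'a \<Rightarrow> real" where
  "lazy_p V E x y =
     (if E x y then 1 / (2 * real (deg V E x)) else if x = y then 1/2 else 0)"

definition lazy_pS :: "'a set \<Rightarrow> ('a \<Rightarrow> 'a \<Rightarrow> bool) \<Rightarrow> 'a \<Rightarrow> 'a set \<Rightarrow> real" where
  "lazy_pS V E x S = (\<Sum>y\<in>S. lazy_p V E x y)"

text \<open>Evolving set process kernel: U uniform on [0,1], new state {y. p(y,S) \<ge> U}.\<close>
definition esp_K :: "'a set \<Rightarrow> ('a \<Rightarrow> 'a \<Rightarrow> bool) \<Rightarrow> 'a set \<Rightarrow> 'a set \<Rightarrow> real" where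
  "esp_K V E S S' =
     measure lborel {u::real \<in> {0..1}. {y \<in> V. lazy_pS V E y S \<ge> u} = S'}"

definition esp_hatK :: "'a set \<Rightarrow> ('a \<Rightarrow> 'a \<Rightarrow> bool) \<Rightarrow> 'a set \<Rightarrow> 'a set \<Rightarrow> real" where
  "esp_hatK V E S S' = vol V E S' / vol V E S * esp_K V E S S'"

definition path_prob :: "'b set \<Rightarrow> ('b \<Rightarrow> 'b \<Rightarrow> real) \<Rightarrow> 'b \<Rightarrow> nat \<Rightarrow> ('b list \<Rightarrow> bool) \<Rightarrow> real" where
  "path_prob St K s0 T P =
     (\<Sum>ss \<in> {ss. length ss = Suc T \<and> set ss \<subseteq> St \<and> hd ss = s0 \<and> P ss}.
        \<Prod>t<T. K (ss ! t) (ss ! Suc t))"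

definition eps_escape :: "'a set \<Rightarrow> ('a \<Rightarrow> 'a \<Rightarrow> bool) \<Rightarrow> 'a \<Rightarrow> nat \<Rightarrow> 'a set \<Rightarrow> real" where
  "eps_escape V E x T A =
     path_prob V (lazy_p V E) x T (\<lambda>xs. \<exists>j\<le>T. xs ! j \<notin> A)"

end

theory Submission
  imports Defs
begin


definition psum :: "'b set \<Rightarrow> ('b \<Rightarrow> 'b \<Rightarrow> real) \<Rightarrow> 'b \<Rightarrow> nat \<Rightarrow> ('b list \<Rightarrow> real) \<Rightarrow> real" where
  "psum St K s0 T f = (\<Sum>ss\<in>{ss. length ss = Suc T \<and> set ss \<subseteq> St \<and> hd ss = s0}.
        (\<Prod>t<T. K (ss ! t) (ss ! Suc t)) * f ss)"

lemma fin_paths: "finite St \<Longrightarrow> finite {ss. length ss = n \<and> set ss \<subseteq> St \<and> P ss}"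
  by (rule finite_subset[OF _ finite_lists_length_eq[of St n]]) auto

lemma path_prob_psum:
  "finite St \<Longrightarrow> path_prob St K s0 T P = psum St K s0 T (\<lambda>ss. if P ss then 1 else 0)"
  unfolding path_prob_def psum_def
  by (rule sum.mono_neutral_cong_left) (auto intro: fin_paths)

lemma psum_cong:
  "(\<And>ss. length ss = Suc T \<Longrightarrow> set ss \<subseteq> St \<Longrightarrow> hd ss = s0 \<Longrightarrow> f ss = g ss)
   \<Longrightarrow> psum St K s0 T f = psum St K s0 T g"
  unfolding psum_def by (intro sum.cong) auto

lemma psum_mono:
  assumes "\<And>s t. s\<in>St \<Longrightarrow> t\<in>St \<Longrightarrow> K s t \<ge> 0"
    and "\<And>ss. length ss = Suc T \<Longrightarrow> set ss \<subseteq> St \<Longrightarrow> hd ss = s0 \<Longrightarrow> f ss \<le> g ss"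
  shows "psum St K s0 T f \<le> psum St K s0 T g"
  unfolding psum_def
proof (intro sum_mono mult_left_mono)
  fix ss assume ss: "ss \<in> {ss. length ss = Suc T \<and> set ss \<subseteq> St \<and> hd ss = s0}"
  then show "f ss \<le> g ss" using assms(2) by auto
  show "0 \<le> (\<Prod>t<T. K (ss ! t) (ss ! Suc t))"
    using ss by (intro prod_nonneg) (auto intro!: assms(1) nth_mem[THEN subsetD[rotated]])
qed

lemma psum_0: "psum St K s0 0 f = (if s0 \<in> St then f [s0] else 0)"
proof -
  have "{ss. length ss = Suc 0 \<and> set ss \<subseteq> St \<and> hd ss = s0} = (if s0 \<in> St then {[s0]} else {})"
    by (auto simp: length_Suc_conv)
  then show ?thesis unfolding psum_def by auto
qed

lemma psum_Suc:
  assumes fin: "finite St" and s0: "s0 \<in> St"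
  shows "psum St K s0 (Suc T) f = (\<Sum>s1\<in>St. K s0 s1 * psum St K s1 T (\<lambda>ss. f (s0 # ss)))"
proof -
  let ?L = "\<lambda>n s. {ss. length ss = Suc n \<and> set ss \<subseteq> St \<and> hd ss = s}"
  have finL: "\<And>n s. finite (?L n s)" using fin by (intro fin_paths)
  have eq: "?L (Suc T) s0 = Cons s0 ` (\<Union>s1\<in>St. ?L T s1)"
  proof
    show "?L (Suc T) s0 \<subseteq> Cons s0 ` (\<Union>s1\<in>St. ?L T s1)"
    proof
      fix ss assume "ss \<in> ?L (Suc T) s0"
      then obtain ss' where ss: "ss = s0 # ss'" "length ss' = Suc T" "set ss' \<subseteq> St"
        by (cases ss) auto
      then have "hd ss' \<in> St" by (cases ss') auto
      with ss show "ss \<in> Cons s0 ` (\<Union>s1\<in>St. ?L T s1)" by blast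
    qed
    show "Cons s0 ` (\<Union>s1\<in>St. ?L T s1) \<subseteq> ?L (Suc T) s0" using s0 by auto
  qed
  have "psum St K s0 (Suc T) f = (\<Sum>ss\<in>(\<Union>s1\<in>St. ?L T s1).
      (\<Prod>t<Suc T. K ((s0#ss) ! t) ((s0#ss) ! Suc t)) * f (s0#ss))"
    unfolding psum_def eq by (subst sum.reindex) (auto simp: inj_on_def)
  also have "\<dots> = (\<Sum>s1\<in>St. \<Sum>ss\<in>?L T s1.
      (\<Prod>t<Suc T. K ((s0#ss) ! t) ((s0#ss) ! Suc t)) * f (s0#ss))"
    by (rule sum.UNION_disjoint) (auto simp: fin finL)
  also have "\<dots> = (\<Sum>s1\<in>St. K s0 s1 * psum St K s1 T (\<lambda>ss. f (s0 # ss)))"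
    unfolding psum_def sum_distrib_left
  proof (intro sum.cong refl)
    fix s1 ss assume "ss \<in> ?L T s1"
    then have "ss ! 0 = s1" by (cases ss) auto
    then show "(\<Prod>t<Suc T. K ((s0#ss) ! t) ((s0#ss) ! Suc t)) * f (s0#ss) =
        K s0 s1 * ((\<Prod>t<T. K (ss ! t) (ss ! Suc t)) * f (s0 # ss))"
      by (simp add: prod.lessThan_Suc_shift del: prod.lessThan_Suc)
  qed
  finally show ?thesis .
qed

lemma psum_const:
  "psum St K s0 T (\<lambda>_. c) = c * psum St K s0 T (\<lambda>_. 1)"
  unfolding psum_def by (simp add: sum_distrib_left mult.commute)

lemma psum_one:
  assumes fin: "finite St" and K1: "\<And>s. s \<in> St \<Longrightarrow> (\<Sum>s'\<in>St. K s s') = 1"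
  shows "s0 \<in> St \<Longrightarrow> psum St K s0 T (\<lambda>_. 1) = 1"
proof (induction T arbitrary: s0)
  case 0 then show ?case by (simp add: psum_0)
next
  case (Suc T)
  then show ?case using K1 by (simp add: psum_Suc[OF fin] cong: sum.cong)
qed

fun stopY :: "(nat \<Rightarrow> 'b \<Rightarrow> real) \<Rightarrow> real \<Rightarrow> 'b list \<Rightarrow> real" where
  "stopY N c [] = 0"
| "stopY N c [s] = N 0 s"
| "stopY N c (s # s' # ss) = (if N 0 s > c then N 0 s else stopY (\<lambda>t. N (Suc t)) c (s' # ss))"

lemma stopY_nonneg: "(\<And>t s. s \<in> St \<Longrightarrow> N t s \<ge> 0) \<Longrightarrow> set ss \<subseteq> St \<Longrightarrow> stopY N c ss \<ge> 0"
  by (induction N c ss rule: stopY.induct) auto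

lemma stopY_gt: "t < length ss \<Longrightarrow> N t (ss ! t) > c \<Longrightarrow> stopY N c ss > c"
proof (induction N c ss arbitrary: t rule: stopY.induct)
  case (3 N c s s' ss)
  show ?case
  proof (cases "N 0 s > c")
    case False
    then have "t \<noteq> 0" using 3 by (cases t) auto
    then obtain t' where "t = Suc t'" by (cases t) auto
    with 3 False show ?thesis by auto
  qed simp
qed auto

lemma doob_aux:
  assumes fin: "finite St" and K0: "\<And>s s'. s\<in>St \<Longrightarrow> s'\<in>St \<Longrightarrow> K s s' \<ge> 0"
   and K1: "\<And>s. s\<in>St \<Longrightarrow> (\<Sum>s'\<in>St. K s s') = 1"
  shows "s0 \<in> St \<Longrightarrow> (\<forall>t. \<forall>s\<in>St. N t s \<ge> 0)
    \<Longrightarrow> (\<forall>t<T. \<forall>s\<in>St. (\<Sum>s'\<in>St. K s s' * N (Suc t) s') \<le> N t s)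
    \<Longrightarrow> psum St K s0 T (stopY N c) \<le> N 0 s0"
proof (induction T arbitrary: N s0)
  case 0 then show ?case by (simp add: psum_0)
next
  case (Suc T)
  note s0 = Suc.prems(1) and N0 = Suc.prems(2) and sup = Suc.prems(3)
  show ?case
  proof (cases "N 0 s0 > c")
    case True
    have "psum St K s0 (Suc T) (stopY N c) = psum St K s0 (Suc T) (\<lambda>_. N 0 s0)"
    proof (rule psum_cong)
      fix ss assume len: "length ss = Suc (Suc T)" and hd: "hd ss = s0"
      obtain a r where "ss = a # r" using len by (cases ss) auto
      moreover obtain b r' where "r = b # r'" using len \<open>ss = a # r\<close> by (cases r) auto
      ultimately have "ss = s0 # b # r'" using hd by simp
      with True show "stopY N c ss = N 0 s0" by simp
    qed
    also have "\<dots> = N 0 s0" by (subst psum_const) (simp add: psum_one[OF fin K1 s0])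
    finally show ?thesis by simp
  next
    case False
    have "psum St K s0 (Suc T) (stopY N c) = (\<Sum>s1\<in>St. K s0 s1 * psum St K s1 T (\<lambda>ss. stopY N c (s0 # ss)))"
      by (rule psum_Suc[OF fin s0])
    also have "\<dots> = (\<Sum>s1\<in>St. K s0 s1 * psum St K s1 T (stopY (\<lambda>t. N (Suc t)) c))"
    proof (intro sum.cong refl arg_cong2[where f="(*)"] psum_cong)
      fix s1 ss assume "length (ss::'a list) = Suc T"
      then obtain s' r where "ss = s' # r" by (cases ss) auto
      with False show "stopY N c (s0 # ss) = stopY (\<lambda>t. N (Suc t)) c ss" by simp
    qed
    also have "\<dots> \<le> (\<Sum>s1\<in>St. K s0 s1 * N (Suc 0) s1)"
    proof (intro sum_mono mult_left_mono)
      fix s1 assume s1: "s1 \<in> St"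
      show "0 \<le> K s0 s1" using K0 s0 s1 .
      have a: "\<forall>t. \<forall>s\<in>St. (\<lambda>t. N (Suc t)) t s \<ge> 0" using N0 by blast
      have b: "\<forall>t<T. \<forall>s\<in>St. (\<Sum>s'\<in>St. K s s' * (\<lambda>t. N (Suc t)) (Suc t) s') \<le> (\<lambda>t. N (Suc t)) t s"
        using sup by simp
      show "psum St K s1 T (stopY (\<lambda>t. N (Suc t)) c) \<le> N (Suc 0) s1"
        using Suc.IH[OF s1 a b] by simp
    qed
    also have "\<dots> \<le> N 0 s0" using sup s0 by blast
    finally show ?thesis .
  qed
qed

lemma doob:
  assumes fin: "finite St" and K0: "\<And>s s'. s\<in>St \<Longrightarrow> s'\<in>St \<Longrightarrow> K s s' \<ge> 0"
   and K1: "\<And>s. s\<in>St \<Longrightarrow> (\<Sum>s'\<in>St. K s s') = 1"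
   and s0: "s0 \<in> St" and N0: "\<And>t s. s\<in>St \<Longrightarrow> N t s \<ge> 0"
   and sup: "\<And>t s. t < T \<Longrightarrow> s\<in>St \<Longrightarrow> (\<Sum>s'\<in>St. K s s' * N (Suc t) s') \<le> N t s"
   and pos: "path_prob St K s0 T (\<lambda>ss. \<exists>t\<le>T. N t (ss ! t) > c) > 0"
  shows "c * path_prob St K s0 T (\<lambda>ss. \<exists>t\<le>T. N t (ss ! t) > c) < N 0 s0"
proof -
  let ?D = "{ss. length ss = Suc T \<and> set ss \<subseteq> St \<and> hd ss = s0}"
  let ?w = "\<lambda>ss. \<Prod>t<T. K (ss ! t) (ss ! Suc t)"
  let ?I = "\<lambda>ss. if \<exists>t\<le>T. N t (ss ! t) > c then 1 else (0::real)"
  have w0: "?w ss \<ge> 0" if "ss \<in> ?D" for ss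
    using that by (intro prod_nonneg) (auto intro!: K0 nth_mem[THEN subsetD[rotated]])
  have Pdef: "path_prob St K s0 T (\<lambda>ss. \<exists>t\<le>T. N t (ss ! t) > c) = (\<Sum>ss\<in>?D. ?w ss * ?I ss)"
    using path_prob_psum[OF fin] unfolding psum_def by simp
  obtain ss0 where ss0: "ss0 \<in> ?D" "?w ss0 * ?I ss0 > 0"
  proof (rule ccontr)
    assume nt: "\<not> thesis"
    have "\<forall>ss\<in>?D. ?w ss * ?I ss \<le> 0"
    proof
      fix ss assume ssD: "ss \<in> ?D"
      show "?w ss * ?I ss \<le> 0"
      proof (rule ccontr)
        assume "\<not> ?w ss * ?I ss \<le> 0"
        then have "?w ss * ?I ss > 0" by (simp only: not_le)
        from that[OF ssD this] nt show False by contradiction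
      qed
    qed
    then have "(\<Sum>ss\<in>?D. ?w ss * ?I ss) \<le> 0" by (intro sum_nonpos) auto
    with pos Pdef show False by simp
  qed
  have "c * path_prob St K s0 T (\<lambda>ss. \<exists>t\<le>T. N t (ss ! t) > c) = (\<Sum>ss\<in>?D. ?w ss * (c * ?I ss))"
    unfolding Pdef sum_distrib_left by (simp add: algebra_simps)
  also have "\<dots> < (\<Sum>ss\<in>?D. ?w ss * stopY N c ss)"
  proof (rule sum_strict_mono_ex1)
    show "finite ?D" using fin by (intro fin_paths)
    show "\<forall>ss\<in>?D. ?w ss * (c * ?I ss) \<le> ?w ss * stopY N c ss"
    proof
      fix ss assume ss: "ss \<in> ?D"
      have "c * ?I ss \<le> stopY N c ss"
      proof (cases "\<exists>t\<le>T. N t (ss ! t) > c")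
        case True
        then obtain t where t: "t \<le> T" "N t (ss!t) > c" by auto
        have "t < length ss" using ss t(1) by simp
        from stopY_gt[where N=N, OF this t(2)] True show ?thesis by simp
      next
        case False
        have "set ss \<subseteq> St" using ss by simp
        from stopY_nonneg[where N=N, OF N0 this] False show ?thesis by (simp only: if_False mult_zero_right)
      qed
      then show "?w ss * (c * ?I ss) \<le> ?w ss * stopY N c ss" using w0[OF ss] by (rule mult_left_mono)
    qed
    show "\<exists>ss\<in>?D. ?w ss * (c * ?I ss) < ?w ss * stopY N c ss"
    proof (intro bexI[OF _ ss0(1)])
      have wp: "?w ss0 > 0" and ev: "\<exists>t\<le>T. N t (ss0 ! t) > c"
        using ss0(2) w0[OF ss0(1)] by (auto split: if_splits)
      then obtain t where t: "t \<le> T" "N t (ss0!t) > c" by auto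
      have "t < length ss0" using ss0(1) t(1) by simp
      from stopY_gt[where N=N, OF this t(2)] have "c < stopY N c ss0" .
      then show "?w ss0 * (c * ?I ss0) < ?w ss0 * stopY N c ss0" using wp ev by simp
    qed
  qed
  also have "\<dots> = psum St K s0 T (stopY N c)" unfolding psum_def ..
  also have "\<dots> \<le> N 0 s0" by (rule doob_aux[OF fin K0 K1 s0]) (use N0 sup in auto)
  finally show ?thesis .
qed



lemma lazy_p_nonneg: "lazy_p V E x y \<ge> 0"
  unfolding lazy_p_def by auto

lemma lazy_p_sum:
  assumes G: "simple_graph V E" and pos: "\<forall>v\<in>V. deg V E v > 0" and y: "y \<in> V"
  shows "(\<Sum>z\<in>V. lazy_p V E y z) = 1"
proof -
  have fin: "finite V" using G unfolding simple_graph_def by auto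
  have irr: "\<not> E y y" using G unfolding simple_graph_def by auto
  let ?d = "real (deg V E y)"
  have d: "?d > 0" using pos y by auto
  have eq: "lazy_p V E y z = (if E y z then 1/(2*?d) else 0) + (if z = y then 1/2 else 0)" for z
    using irr unfolding lazy_p_def by auto
  have "(\<Sum>z\<in>V. lazy_p V E y z) = (\<Sum>z\<in>V. (if E y z then 1/(2*?d) else 0)) + (\<Sum>z\<in>V. (if z = y then 1/2 else (0::real)))"
    unfolding eq by (rule sum.distrib)
  also have "(\<Sum>z\<in>V. (if E y z then 1/(2*?d) else 0)) = real (card {z\<in>V. E y z}) * (1/(2*?d))"
    using fin by (simp add: sum.If_cases Int_def conj_commute)
  also have "\<dots> = 1/2" using d unfolding deg_def by simp
  also have "(\<Sum>z\<in>V. (if z = y then 1/2 else (0::real))) = 1/2"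
    using fin y by (simp add: sum.delta)
  finally show ?thesis by simp
qed

lemma lazy_p_rev:
  assumes G: "simple_graph V E" and pos: "\<forall>v\<in>V. deg V E v > 0" and y: "y \<in> V" and z: "z \<in> V"
  shows "real (deg V E y) * lazy_p V E y z = real (deg V E z) * lazy_p V E z y"
proof -
  have sym: "E y z = E z y" using G unfolding simple_graph_def by blast
  have "deg V E y > 0" "deg V E z > 0" using pos y z by auto
  then show ?thesis unfolding lazy_p_def using sym by auto
qed

lemma lazy_pS_range:
  assumes G: "simple_graph V E" and pos: "\<forall>v\<in>V. deg V E v > 0" and y: "y \<in> V" and S: "S \<subseteq> V"
  shows "0 \<le> lazy_pS V E y S" "lazy_pS V E y S \<le> 1"
proof -
  have fin: "finite V" using G unfolding simple_graph_def by auto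
  show "0 \<le> lazy_pS V E y S" unfolding lazy_pS_def by (intro sum_nonneg lazy_p_nonneg)
  have "lazy_pS V E y S \<le> (\<Sum>z\<in>V. lazy_p V E y z)"
    unfolding lazy_pS_def using fin S by (intro sum_mono2) (auto intro: lazy_p_nonneg)
  then show "lazy_pS V E y S \<le> 1" using lazy_p_sum[OF G pos y] by simp
qed

lemma vol_pos:
  assumes G: "simple_graph V E" and pos: "\<forall>v\<in>V. deg V E v > 0" and S: "S \<subseteq> V" "S \<noteq> {}"
  shows "vol V E S > 0"
proof -
  have fin: "finite S" using G S unfolding simple_graph_def by (auto intro: finite_subset)
  have "\<forall>v\<in>S. deg V E v > 0" using S pos by blast
  then show ?thesis unfolding vol_def using fin S by (intro sum_pos) auto
qed

lemma esp_K_sum: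
  assumes G: "simple_graph V E" and pos: "\<forall>v\<in>V. deg V E v > 0" and y: "y \<in> V" and S: "S \<subseteq> V"
  shows "(\<Sum>S'\<in>{S'\<in>{S. S \<subseteq> V \<and> S \<noteq> {}}. y \<in> S'}. esp_K V E S S') = lazy_pS V E y S"
proof -
  have fin: "finite V" using G unfolding simple_graph_def by auto
  define F where "F u = {z\<in>V. lazy_pS V E z S \<ge> u}" for u :: real
  define B where "B S' = {u\<in>{0..1::real}. F u = S'}" for S'
  define Y where "Y = {S'\<in>{S. S \<subseteq> V \<and> S \<noteq> {}}. y \<in> S'}"
  have finY: "finite Y" unfolding Y_def using fin by (auto intro: finite_subset[of _ "Pow V"])
  have Bset: "B S' \<in> sets lborel" if "S' \<in> Y" for S'
  proof -
    have "B S' = {u\<in>{0..1::real}. \<forall>z\<in>V. (u \<le> lazy_pS V E z S) = (z \<in> S')}"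
      using that unfolding B_def F_def Y_def by auto
    also have "\<dots> \<in> sets lborel" using fin by measurable
    finally show ?thesis .
  qed
  have Bfin: "emeasure lborel (B S') \<noteq> \<infinity>" for S'
  proof -
    have "emeasure lborel (B S') \<le> emeasure lborel {0..1::real}"
      by (rule emeasure_mono) (auto simp: B_def)
    then show ?thesis by (auto simp: top_unique)
  qed
  have disj: "disjoint_family_on B Y" unfolding disjoint_family_on_def B_def by auto
  have "(\<Sum>S'\<in>Y. esp_K V E S S') = (\<Sum>S'\<in>Y. measure lborel (B S'))"
    unfolding esp_K_def B_def F_def ..
  also have "\<dots> = measure lborel (\<Union>S'\<in>Y. B S')"
    by (rule measure_finite_Union[symmetric]) (use finY Bset disj Bfin in auto)
  also have "(\<Union>S'\<in>Y. B S') = {0..lazy_pS V E y S}"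
    using lazy_pS_range[OF G pos y S] y unfolding B_def F_def Y_def by auto
  also have "measure lborel {0..lazy_pS V E y S} = lazy_pS V E y S"
    using lazy_pS_range[OF G pos y S] by simp
  finally show ?thesis unfolding Y_def .
qed



lemma intertwine:
  assumes G: "simple_graph V E" and pos: "\<forall>v\<in>V. deg V E v > 0"
    and S: "S \<subseteq> V" "S \<noteq> {}"
  shows "(\<Sum>S'\<in>{S. S \<subseteq> V \<and> S \<noteq> {}}. esp_hatK V E S S' * ((\<Sum>y\<in>S'. real (deg V E y) * h y) / vol V E S'))
     = (\<Sum>z\<in>S. real (deg V E z) * (\<Sum>y\<in>V. lazy_p V E z y * h y)) / vol V E S"
proof -
  let ?St = "{S. S \<subseteq> V \<and> S \<noteq> {}}"
  let ?d = "\<lambda>y. real (deg V E y)"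
  have fin: "finite V" using G unfolding simple_graph_def by auto
  have finSt: "finite ?St" using fin by (auto intro: finite_subset[of _ "Pow V"])
  have finS: "finite S" using fin S by (auto intro: finite_subset)
  have vS: "vol V E S > 0" by (rule vol_pos[OF G pos S])
  have "(\<Sum>S'\<in>?St. esp_hatK V E S S' * ((\<Sum>y\<in>S'. ?d y * h y) / vol V E S'))
      = (\<Sum>S'\<in>?St. (\<Sum>y\<in>{y\<in>V. y \<in> S'}. esp_K V E S S' * (?d y * h y)) / vol V E S)"
  proof (rule sum.cong[OF refl])
    fix S' assume S': "S' \<in> ?St"
    have v': "vol V E S' > 0" using S' by (intro vol_pos[OF G pos]) auto
    have eqs: "{y\<in>V. y \<in> S'} = S'" using S' by auto
    show "esp_hatK V E S S' * ((\<Sum>y\<in>S'. ?d y * h y) / vol V E S') =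
        (\<Sum>y\<in>{y\<in>V. y \<in> S'}. esp_K V E S S' * (?d y * h y)) / vol V E S"
      unfolding eqs esp_hatK_def sum_distrib_left[symmetric] using v' vS by (simp add: field_simps)
  qed
  also have "\<dots> = (\<Sum>S'\<in>?St. \<Sum>y\<in>{y\<in>V. y \<in> S'}. esp_K V E S S' * (?d y * h y)) / vol V E S"
    by (rule sum_divide_distrib[symmetric])
  also have "(\<Sum>S'\<in>?St. \<Sum>y\<in>{y\<in>V. y \<in> S'}. esp_K V E S S' * (?d y * h y))
      = (\<Sum>y\<in>V. \<Sum>S'\<in>{S'\<in>?St. y \<in> S'}. esp_K V E S S' * (?d y * h y))"
    by (rule sum.swap_restrict[OF finSt fin])
  also have "\<dots> = (\<Sum>y\<in>V. lazy_pS V E y S * (?d y * h y))"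
  proof (intro sum.cong refl)
    fix y assume y: "y \<in> V"
    show "(\<Sum>S'\<in>{S'\<in>?St. y \<in> S'}. esp_K V E S S' * (?d y * h y)) = lazy_pS V E y S * (?d y * h y)"
      unfolding sum_distrib_right[symmetric] esp_K_sum[OF G pos y S(1)] ..
  qed
  also have "\<dots> = (\<Sum>y\<in>V. \<Sum>z\<in>S. lazy_p V E y z * (?d y * h y))"
    unfolding lazy_pS_def sum_distrib_right ..
  also have "\<dots> = (\<Sum>z\<in>S. \<Sum>y\<in>V. lazy_p V E y z * (?d y * h y))"
    by (rule sum.swap)
  also have "\<dots> = (\<Sum>z\<in>S. ?d z * (\<Sum>y\<in>V. lazy_p V E z y * h y))"
    unfolding sum_distrib_left
  proof (intro sum.cong refl)
    fix z y assume z: "z \<in> S" and y: "y \<in> V"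
    have "?d y * lazy_p V E y z = ?d z * lazy_p V E z y"
      using z S(1) y by (intro lazy_p_rev[OF G pos]) auto
    then show "lazy_p V E y z * (?d y * h y) = ?d z * (lazy_p V E z y * h y)"
      by (metis mult.assoc mult.commute)
  qed
  finally show ?thesis .
qed



theorem lemma2:
  fixes V :: "'a set" and E :: "'a \<Rightarrow> 'a \<Rightarrow> bool"
    and x :: 'a and A :: "'a set" and T :: nat and lam :: real
  assumes "simple_graph V E"
    and "\<forall>v\<in>V. deg V E v > 0"
    and "x \<in> V"
    and "A \<subseteq> V"
    and "lam > 0"
  shows "path_prob {S. S \<subseteq> V \<and> S \<noteq> {}} (esp_hatK V E) {x} T
           (\<lambda>ss. Max ((\<lambda>t. vol V E (ss ! t - A) / vol V E (ss ! t)) ` {0..T})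
                  > lam * eps_escape V E x T A)
         < 1 / lam"
proof -
  note G = assms(1) and pos = assms(2) and xV = assms(3) and lam = assms(5)
  let ?St = "{S. S \<subseteq> V \<and> S \<noteq> {}}"
  let ?d = "\<lambda>y. real (deg V E y)"
  let ?p = "lazy_p V E"
  let ?eps = "eps_escape V E x T A"
  have fin: "finite V" using G unfolding simple_graph_def by auto
  have finSt: "finite ?St" using fin by (auto intro: finite_subset[of _ "Pow V"])
  define g where "g t y = path_prob V ?p y (T - t) (\<lambda>xs. \<exists>j\<le>T - t. xs ! j \<notin> A)" for t y
  define N where "N t S = (\<Sum>y\<in>S. ?d y * g t y) / vol V E S" for t S
  define c where "c = lam * ?eps"
  have p1: "\<And>s. s \<in> V \<Longrightarrow> (\<Sum>s'\<in>V. ?p s s') = 1" using lazy_p_sum[OF G pos] by blast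
  have g0: "g t y \<ge> 0" for t y
    unfolding g_def path_prob_def by (intro sum_nonneg prod_nonneg) (simp add: lazy_p_nonneg)
  have g1: "g t y = 1" if y: "y \<in> V" "y \<notin> A" for t y
  proof -
    have "g t y = psum V ?p y (T - t) (\<lambda>ss. if \<exists>j\<le>T - t. ss ! j \<notin> A then 1 else 0)"
      unfolding g_def by (rule path_prob_psum[OF fin])
    also have "\<dots> = psum V ?p y (T - t) (\<lambda>_. 1)"
    proof (rule psum_cong)
      fix ss :: "'a list" assume "length ss = Suc (T - t)" "hd ss = y"
      then have "ss ! 0 = y" by (cases ss) auto
      then show "(if \<exists>j\<le>T - t. ss ! j \<notin> A then 1 else 0) = (1::real)" using y by auto
    qed
    also have "\<dots> = 1" by (rule psum_one[OF fin p1 y(1)])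
    finally show ?thesis .
  qed
  have g2: "(\<Sum>z\<in>V. ?p y z * g (Suc t) z) \<le> g t y" if t: "t < T" and y: "y \<in> V" for t y
  proof -
    define m where "m = T - Suc t"
    have Tm: "T - t = Suc m" using t unfolding m_def by simp
    have "g t y = psum V ?p y (Suc m) (\<lambda>ss. if \<exists>j\<le>Suc m. ss ! j \<notin> A then 1 else 0)"
      unfolding g_def Tm by (rule path_prob_psum[OF fin])
    also have "\<dots> = (\<Sum>z\<in>V. ?p y z * psum V ?p z m (\<lambda>ss. if \<exists>j\<le>Suc m. (y # ss) ! j \<notin> A then 1 else 0))"
      by (rule psum_Suc[OF fin y])
    finally have eq: "g t y = \<dots>" .
    have "(\<Sum>z\<in>V. ?p y z * g (Suc t) z) \<le> (\<Sum>z\<in>V. ?p y z * psum V ?p z m (\<lambda>ss. if \<exists>j\<le>Suc m. (y # ss) ! j \<notin> A then 1 else 0))"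
    proof (intro sum_mono mult_left_mono)
      fix z assume z: "z \<in> V"
      show "0 \<le> ?p y z" by (rule lazy_p_nonneg)
      have "g (Suc t) z = psum V ?p z m (\<lambda>ss. if \<exists>j\<le>m. ss ! j \<notin> A then 1 else 0)"
        unfolding g_def m_def by (rule path_prob_psum[OF fin])
      also have "\<dots> \<le> psum V ?p z m (\<lambda>ss. if \<exists>j\<le>Suc m. (y # ss) ! j \<notin> A then 1 else 0)"
      proof (rule psum_mono)
        show "\<And>s t. s \<in> V \<Longrightarrow> t \<in> V \<Longrightarrow> 0 \<le> ?p s t" by (rule lazy_p_nonneg)
        fix ss :: "'a list"
        show "(if \<exists>j\<le>m. ss ! j \<notin> A then 1 else 0) \<le> (if \<exists>j\<le>Suc m. (y # ss) ! j \<notin> A then 1 else (0::real))"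
        proof (cases "\<exists>j\<le>m. ss ! j \<notin> A")
          case True
          then obtain j where "j \<le> m" "ss ! j \<notin> A" by auto
          then have "\<exists>j\<le>Suc m. (y # ss) ! j \<notin> A" by (intro exI[of _ "Suc j"]) auto
          then show ?thesis by simp
        qed auto
      qed
      finally show "g (Suc t) z \<le> psum V ?p z m (\<lambda>ss. if \<exists>j\<le>Suc m. (y # ss) ! j \<notin> A then 1 else 0)" .
    qed
    then show ?thesis using eq by simp
  qed
  have K0: "\<And>s s'. s \<in> ?St \<Longrightarrow> s' \<in> ?St \<Longrightarrow> esp_hatK V E s s' \<ge> 0"
    unfolding esp_hatK_def esp_K_def vol_def by (intro mult_nonneg_nonneg divide_nonneg_nonneg sum_nonneg) auto
  have K1: "\<And>s. s \<in> ?St \<Longrightarrow> (\<Sum>s'\<in>?St. esp_hatK V E s s') = 1"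
  proof -
    fix S assume S: "S \<in> ?St"
    have "(\<Sum>s'\<in>?St. esp_hatK V E S s') = (\<Sum>s'\<in>?St. esp_hatK V E S s' * ((\<Sum>y\<in>s'. ?d y * 1) / vol V E s'))"
    proof (intro sum.cong refl)
      fix s' assume "s' \<in> ?St"
      then have "vol V E s' > 0" by (intro vol_pos[OF G pos]) auto
      then show "esp_hatK V E S s' = esp_hatK V E S s' * ((\<Sum>y\<in>s'. ?d y * 1) / vol V E s')"
        unfolding vol_def by simp
    qed
    also have "\<dots> = (\<Sum>z\<in>S. ?d z * (\<Sum>y\<in>V. ?p z y * 1)) / vol V E S"
      using S by (intro intertwine[OF G pos]) auto
    also have "\<dots> = (\<Sum>z\<in>S. ?d z) / vol V E S"
      using S p1 by (intro arg_cong2[where f="(/)"] sum.cong refl) auto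
    also have "\<dots> = 1" using vol_pos[OF G pos, of S] S unfolding vol_def by auto
    finally show "(\<Sum>s'\<in>?St. esp_hatK V E S s') = 1" .
  qed
  have N0: "N t S \<ge> 0" if "S \<in> ?St" for t S
    unfolding N_def vol_def using g0 by (intro divide_nonneg_nonneg sum_nonneg mult_nonneg_nonneg) auto
  have sup: "(\<Sum>S'\<in>?St. esp_hatK V E S S' * N (Suc t) S') \<le> N t S" if t: "t < T" and S: "S \<in> ?St" for t S
  proof -
    have "(\<Sum>S'\<in>?St. esp_hatK V E S S' * N (Suc t) S') = (\<Sum>z\<in>S. ?d z * (\<Sum>y\<in>V. ?p z y * g (Suc t) y)) / vol V E S"
      unfolding N_def using S by (intro intertwine[OF G pos]) auto
    also have "\<dots> \<le> (\<Sum>z\<in>S. ?d z * g t z) / vol V E S"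
    proof (intro divide_right_mono sum_mono mult_left_mono)
      fix z assume "z \<in> S"
      then have "z \<in> V" using S by auto
      then show "(\<Sum>y\<in>V. ?p z y * g (Suc t) y) \<le> g t z" by (rule g2[OF t])
    qed (auto simp: vol_def intro: sum_nonneg)
    finally show ?thesis unfolding N_def .
  qed
  have RN: "vol V E (S - A) / vol V E S \<le> N t S" if S: "S \<in> ?St" for t S
  proof -
    have finS: "finite S" using S fin by (auto intro: finite_subset)
    have "vol V E (S - A) = (\<Sum>y\<in>S - A. ?d y * g t y)"
      unfolding vol_def using S g1 by (intro sum.cong refl) auto
    also have "\<dots> \<le> (\<Sum>y\<in>S. ?d y * g t y)"
      using finS g0 by (intro sum_mono2) auto
    finally show ?thesis unfolding N_def
      using vol_pos[OF G pos, of S] S by (intro divide_right_mono) auto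
  qed
  have Neps: "N 0 {x} = ?eps"
  proof -
    have "deg V E x > 0" using pos xV by auto
    then show ?thesis unfolding N_def vol_def g_def eps_escape_def by simp
  qed
  have xSt: "{x} \<in> ?St" using xV by auto
  let ?Ev = "\<lambda>ss. Max ((\<lambda>t. vol V E (ss ! t - A) / vol V E (ss ! t)) ` {0..T}) > c"
  let ?EvN = "\<lambda>ss. \<exists>t\<le>T. N t (ss ! t) > c"
  let ?D = "\<lambda>P. {ss. length ss = Suc T \<and> set ss \<subseteq> ?St \<and> hd ss = {x} \<and> P ss}"
  have wnn: "(\<Prod>t<T. esp_hatK V E (ss ! t) (ss ! Suc t)) \<ge> 0" if "set ss \<subseteq> ?St" "length ss = Suc T" for ss
  proof (intro prod_nonneg K0)
    fix t assume "t \<in> {..<T}"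
    then have "t < length ss" "Suc t < length ss" using that by auto
    then show "ss ! t \<in> ?St" "ss ! Suc t \<in> ?St" using that(1) nth_mem by blast+
  qed
  have Pnn: "path_prob ?St (esp_hatK V E) {x} T ?Ev \<ge> 0"
    unfolding path_prob_def using wnn by (intro sum_nonneg) auto
  have PleN: "path_prob ?St (esp_hatK V E) {x} T ?Ev \<le> path_prob ?St (esp_hatK V E) {x} T ?EvN"
    unfolding path_prob_def
  proof (rule sum_mono2)
    show "finite (?D ?EvN)" using finSt by (intro fin_paths)
    show "?D ?Ev \<subseteq> ?D ?EvN"
    proof
      fix ss assume ss: "ss \<in> ?D ?Ev"
      then have "\<exists>a\<in>(\<lambda>t. vol V E (ss ! t - A) / vol V E (ss ! t)) ` {0..T}. c < a"
        by (subst Max_gr_iff[symmetric]) auto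
      then obtain t where t: "t \<le> T" "c < vol V E (ss ! t - A) / vol V E (ss ! t)" by auto
      have "t < length ss" using ss t(1) by auto
      then have "ss ! t \<in> ?St" using ss nth_mem by blast
      with RN t have "c < N t (ss ! t)" by (meson less_le_trans)
      with t ss show "ss \<in> ?D ?EvN" by auto
    qed
    show "\<And>ss. ss \<in> ?D ?EvN - ?D ?Ev \<Longrightarrow> 0 \<le> (\<Prod>t<T. esp_hatK V E (ss ! t) (ss ! Suc t))"
      using wnn by auto
  qed
  show ?thesis
  proof (cases "path_prob ?St (esp_hatK V E) {x} T ?Ev > 0")
    case False
    then show ?thesis using lam Pnn unfolding c_def by simp
  next
    case True
    with PleN have posN: "path_prob ?St (esp_hatK V E) {x} T ?EvN > 0" by simp
    have "c * path_prob ?St (esp_hatK V E) {x} T ?EvN < N 0 {x}"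
      by (rule doob[OF finSt K0 K1 xSt N0 sup posN]) auto
    then have lt: "lam * ?eps * path_prob ?St (esp_hatK V E) {x} T ?EvN < ?eps"
      unfolding c_def Neps .
    have "?eps \<ge> 0" unfolding Neps[symmetric] using N0 xSt by blast
    then have epos: "?eps > 0" using lt lam posN
      by (cases "?eps = 0") auto
    have "lam * path_prob ?St (esp_hatK V E) {x} T ?EvN < 1"
      using lt epos by (simp add: mult.commute mult.left_commute)
    then have "path_prob ?St (esp_hatK V E) {x} T ?EvN < 1 / lam"
      using lam by (simp add: field_simps)
    then show ?thesis using PleN unfolding c_def by simp
  qed
qed


end
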